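(* In the setting below, for every such model one has $\operatorname{corr}(X_i,Y_j)\in[-\beta,\beta]$ for all $i,j$. Moreover $\operatorname{corr}(X_i,Y_j)=\beta$ (respectively $=-\beta$) if and only if $\bar W_k=\bar J_k$ almost surely for every $k$ and $\rho_0=1$ (respectively $\rho_0=-1$).
   Context: Setting: $G_0$ is a probability measure on $\mathbb{R}^2$ whose two marginals both equal a probability measure $P_0$ on $\mathbb{R}$ with finite, strictly positive variance; $\rho_0$ is the correlation of the two coordinates under $G_0$. Let $(\theta_k,\phi_k)\overset{iid}{\sim}G_0$, independent of nonnegative random weights $(\bar J_k)_{k\ge1},(\bar W_k)_{k\ge1}$ with $\sum_k\bar J_k=\sum_k\bar W_k=1$ a.s. and $\bar J_k$, $\bar W_k$ equal in distribution for each $k$ (so $\tilde p_1$ and $\tilde p_2$ below have the same marginal law, which is regarded as fixed). Set $\tilde p_1=\sum_k\bar J_k\delta_{\theta_k}$, $\tilde p_2=\sum_k\bar W_k\delta_{\phi_k}$; conditionally on $(\tilde p_1,\tilde p_2)$ the $X_i$, $Y_j$ are independent with $X_i\sim\tilde p_1$, $Y_j\sim\tilde p_2$. Let $\beta:=\sum_k\mathbb{E}(\bar J_k^2)$. *)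

theory Defs
  imports "HOL-Probability.Probability"
begin

definition correlation :: "'a measure \<Rightarrow> ('a \<Rightarrow> real) \<Rightarrow> ('a \<Rightarrow> real) \<Rightarrow> real" where
  "correlation M X Y =
     (\<integral>\<omega>. (X \<omega> - (\<integral>x. X x \<partial>M)) * (Y \<omega> - (\<integral>x. Y x \<partial>M)) \<partial>M)
     / sqrt ((\<integral>\<omega>. (X \<omega> - (\<integral>x. X x \<partial>M))\<^sup>2 \<partial>M) * (\<integral>\<omega>. (Y \<omega> - (\<integral>x. Y x \<partial>M))\<^sup>2 \<partial>M))"

definition rand_meas :: "(nat \<Rightarrow> real) \<Rightarrow> (nat \<Rightarrow> real) \<Rightarrow> real set \<Rightarrow> real" where
  "rand_meas w a B = (\<Sum>k. w k * indicator B (a k))"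

end

theory Submission
  imports Defs
begin

lemma transfer_lemma:
  fixes a b :: "'a \<Rightarrow> ennreal" and Z :: "'a \<Rightarrow> real" and w :: "nat \<Rightarrow> 'a \<Rightarrow> ennreal"
    and \<psi> :: "nat \<Rightarrow> 'a \<Rightarrow> real" and g :: "real \<Rightarrow> ennreal"
  assumes am[measurable]: "a \<in> borel_measurable M" and bm[measurable]: "b \<in> borel_measurable M"
    and Zm[measurable]: "Z \<in> borel_measurable M" and wm[measurable]: "\<And>l. w l \<in> borel_measurable M"
    and pm[measurable]: "\<And>l. \<psi> l \<in> borel_measurable M"
    and base: "\<And>C. C \<in> sets borel \<Longrightarrow> (\<integral>\<^sup>+\<omega>. a \<omega> * indicator C (Z \<omega>) \<partial>M)
        = (\<integral>\<^sup>+\<omega>. b \<omega> * (\<Sum>l. w l \<omega> * indicator C (\<psi> l \<omega>)) \<partial>M)"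
    and g: "g \<in> borel_measurable borel"
  shows "(\<integral>\<^sup>+\<omega>. a \<omega> * g (Z \<omega>) \<partial>M) = (\<integral>\<^sup>+\<omega>. b \<omega> * (\<Sum>l. w l \<omega> * g (\<psi> l \<omega>)) \<partial>M)"
  using g
proof (induction g rule: borel_measurable_induct)
  case (cong f g)
  then have "f = g" by auto
  then show ?case using cong by simp
next
  case (set A)
  then show ?case using base by simp
next
  case (mult u c)
  note [measurable] = mult(2)
  have "(\<integral>\<^sup>+\<omega>. a \<omega> * (c * u (Z \<omega>)) \<partial>M) = (\<integral>\<^sup>+\<omega>. c * (a \<omega> * u (Z \<omega>)) \<partial>M)"
    by (simp add: ac_simps)
  also have "\<dots> = c * (\<integral>\<^sup>+\<omega>. a \<omega> * u (Z \<omega>) \<partial>M)"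
    by (rule nn_integral_cmult) measurable
  also have "\<dots> = c * (\<integral>\<^sup>+\<omega>. b \<omega> * (\<Sum>l. w l \<omega> * u (\<psi> l \<omega>)) \<partial>M)"
    using mult by simp
  also have "\<dots> = (\<integral>\<^sup>+\<omega>. c * (b \<omega> * (\<Sum>l. w l \<omega> * u (\<psi> l \<omega>))) \<partial>M)"
    by (rule nn_integral_cmult[symmetric]) measurable
  also have "\<dots> = (\<integral>\<^sup>+\<omega>. b \<omega> * (\<Sum>l. w l \<omega> * (c * u (\<psi> l \<omega>))) \<partial>M)"
  proof (rule nn_integral_cong)
    fix \<omega>
    have "(\<Sum>l. w l \<omega> * (c * u (\<psi> l \<omega>))) = (\<Sum>l. c * (w l \<omega> * u (\<psi> l \<omega>)))"
      by (simp only: mult.left_commute)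
    also have "\<dots> = c * (\<Sum>l. w l \<omega> * u (\<psi> l \<omega>))"
      by (rule ennreal_suminf_cmult)
    finally show "c * (b \<omega> * (\<Sum>l. w l \<omega> * u (\<psi> l \<omega>))) = b \<omega> * (\<Sum>l. w l \<omega> * (c * u (\<psi> l \<omega>)))"
      by (simp only: mult.left_commute)
  qed
  finally show ?case .
next
  case (add u v)
  have [measurable]: "u \<in> borel_measurable borel" "v \<in> borel_measurable borel" using add by auto
  have "(\<integral>\<^sup>+\<omega>. a \<omega> * (v (Z \<omega>) + u (Z \<omega>)) \<partial>M)
      = (\<integral>\<^sup>+\<omega>. a \<omega> * v (Z \<omega>) + a \<omega> * u (Z \<omega>) \<partial>M)"
    by (simp add: distrib_left)
  also have "\<dots> = (\<integral>\<^sup>+\<omega>. a \<omega> * v (Z \<omega>) \<partial>M) + (\<integral>\<^sup>+\<omega>. a \<omega> * u (Z \<omega>) \<partial>M)"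
    by (rule nn_integral_add) measurable
  also have "\<dots> = (\<integral>\<^sup>+\<omega>. b \<omega> * (\<Sum>l. w l \<omega> * v (\<psi> l \<omega>)) \<partial>M)
     + (\<integral>\<^sup>+\<omega>. b \<omega> * (\<Sum>l. w l \<omega> * u (\<psi> l \<omega>)) \<partial>M)"
    using add by simp
  also have "\<dots> = (\<integral>\<^sup>+\<omega>. b \<omega> * (\<Sum>l. w l \<omega> * v (\<psi> l \<omega>)) + b \<omega> * (\<Sum>l. w l \<omega> * u (\<psi> l \<omega>)) \<partial>M)"
    by (rule nn_integral_add[symmetric]) measurable
  also have "\<dots> = (\<integral>\<^sup>+\<omega>. b \<omega> * (\<Sum>l. w l \<omega> * (v (\<psi> l \<omega>) + u (\<psi> l \<omega>))) \<partial>M)"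
    by (simp add: distrib_left[symmetric] suminf_add del: distrib_left)
  finally show ?case by simp
next
  case (seq U)
  note [measurable] = seq(1)
  have incU: "incseq U" using seq by blast
  have incU': "\<And>m n y. m \<le> n \<Longrightarrow> U m y \<le> U n y" using incU by (auto simp: incseq_def le_fun_def)
  have incL: "incseq (\<lambda>i \<omega>. a \<omega> * U i (Z \<omega>))"
    by (auto simp: incseq_def le_fun_def intro!: mult_left_mono incU')
  have incR: "incseq (\<lambda>i \<omega>. b \<omega> * (\<Sum>l. w l \<omega> * U i (\<psi> l \<omega>)))"
    by (auto simp: incseq_def le_fun_def intro!: mult_left_mono suminf_le incU')
  have "(\<integral>\<^sup>+\<omega>. a \<omega> * (SUP i. U i) (Z \<omega>) \<partial>M) = (\<integral>\<^sup>+\<omega>. (SUP i. a \<omega> * U i (Z \<omega>)) \<partial>M)"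
    by (simp add: SUP_apply SUP_mult_left_ennreal image_comp)
  also have "\<dots> = (SUP i. \<integral>\<^sup>+\<omega>. a \<omega> * U i (Z \<omega>) \<partial>M)"
    by (rule nn_integral_monotone_convergence_SUP[OF incL]) measurable
  also have "\<dots> = (SUP i. \<integral>\<^sup>+\<omega>. b \<omega> * (\<Sum>l. w l \<omega> * U i (\<psi> l \<omega>)) \<partial>M)"
    using seq.IH by simp
  also have "\<dots> = (\<integral>\<^sup>+\<omega>. (SUP i. b \<omega> * (\<Sum>l. w l \<omega> * U i (\<psi> l \<omega>))) \<partial>M)"
    by (rule nn_integral_monotone_convergence_SUP[OF incR, symmetric]) measurable
  also have "\<dots> = (\<integral>\<^sup>+\<omega>. b \<omega> * (\<Sum>l. w l \<omega> * (SUP i. U i) (\<psi> l \<omega>)) \<partial>M)"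
  proof (rule nn_integral_cong)
    fix \<omega>
    have "(\<Sum>l. w l \<omega> * (SUP i. U i) (\<psi> l \<omega>)) = (\<Sum>l. SUP i. w l \<omega> * U i (\<psi> l \<omega>))"
      by (simp add: SUP_apply SUP_mult_left_ennreal image_comp)
    also have "\<dots> = (SUP i. \<Sum>l. w l \<omega> * U i (\<psi> l \<omega>))"
      by (rule ennreal_suminf_SUP_eq) (auto simp: incseq_def le_fun_def intro!: mult_left_mono incU')
    finally show "(SUP i. b \<omega> * (\<Sum>l. w l \<omega> * U i (\<psi> l \<omega>))) = b \<omega> * (\<Sum>l. w l \<omega> * (SUP i. U i) (\<psi> l \<omega>))"
      by (simp add: SUP_mult_left_ennreal)
  qed
  finally show ?case .
qed




lemma rm_facts:
  fixes w a :: "nat \<Rightarrow> real"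
  assumes "\<forall>k. 0 \<le> w k" "w sums 1"
  shows "0 \<le> rand_meas w a B" "rand_meas w a B \<le> 1"
    "ennreal (rand_meas w a B) = (\<Sum>k. ennreal (w k) * indicator B (a k))"
proof -
  have sw: "summable w" using assms(2) by (auto simp: sums_iff)
  have s: "summable (\<lambda>k. w k * indicator B (a k))"
    by (rule summable_comparison_test'[OF sw, of 0]) (use assms in \<open>auto simp: indicator_def\<close>)
  have nn: "\<And>k. 0 \<le> w k * indicator B (a k)" using assms by auto
  show "0 \<le> rand_meas w a B" unfolding rand_meas_def using s nn by (simp add: suminf_nonneg)
  have "rand_meas w a B \<le> suminf w" unfolding rand_meas_def
    by (rule suminf_le[OF _ s sw]) (use assms in \<open>auto simp: indicator_def\<close>)
  then show "rand_meas w a B \<le> 1" using assms(2) by (simp add: sums_iff)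
  have "ennreal (rand_meas w a B) = (\<Sum>k. ennreal (w k * indicator B (a k)))"
    unfolding rand_meas_def by (rule suminf_ennreal2[symmetric, OF nn s])
  also have "\<dots> = (\<Sum>k. ennreal (w k) * indicator B (a k))"
    using assms(1) by (intro suminf_cong) (simp add: ennreal_mult ennreal_indicator)
  finally show "ennreal (rand_meas w a B) = (\<Sum>k. ennreal (w k) * indicator B (a k))" .
qed

lemma indep_var_nn_integral:
  fixes X1 X2 :: "'a \<Rightarrow> ennreal"
  assumes "prob_space M" "prob_space.indep_var M borel X1 borel X2"
  shows "(\<integral>\<^sup>+\<omega>. X1 \<omega> * X2 \<omega> \<partial>M) = (\<integral>\<^sup>+\<omega>. X1 \<omega> \<partial>M) * (\<integral>\<^sup>+\<omega>. X2 \<omega> \<partial>M)"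
proof -
  interpret prob_space M by fact
  have *: "(\<lambda>\<omega>. X1 \<omega> * X2 \<omega>) = (\<lambda>\<omega>. \<Prod>i\<in>UNIV. (case_bool X1 X2 i \<omega>))"
    by (simp add: UNIV_bool mult.commute)
  have **: "(\<lambda> _. borel) = case_bool borel borel"
    by (rule ext, metis (full_types) bool.simps(3) bool.simps(4))
  have ind: "indep_vars (\<lambda>_. borel) (case_bool X1 X2) UNIV"
    using assms(2) unfolding indep_var_def ** .
  show ?thesis
    apply (subst *)
    apply (subst indep_vars_nn_integral[OF _ ind])
    apply (auto simp: UNIV_bool mult.commute)
    done
qed

lemma dsum:
  fixes q :: "nat \<Rightarrow> nat \<Rightarrow> ennreal" and c d :: ennreal
  shows "(\<Sum>k. \<Sum>l. q k l * (if k = l then d else c)) + (\<Sum>k. q k k) * c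
       = (\<Sum>k. \<Sum>l. q k l) * c + (\<Sum>k. q k k) * d"
proof -
  have sg: "\<And>k (h :: nat \<Rightarrow> ennreal). (\<Sum>l. if l = k then h l else 0) = h k"
    by (rule sums_unique[symmetric]) (rule sums_single)
  have inner: "(\<Sum>l. q k l * (if k = l then d else c)) + q k k * c = (\<Sum>l. q k l) * c + q k k * d" for k
  proof -
    have "(\<Sum>l. q k l * (if k = l then d else c)) + q k k * c
        = (\<Sum>l. q k l * (if k = l then d else c)) + (\<Sum>l. if l = k then q k l * c else 0)"
      using sg[of k "\<lambda>l. q k l * c"] by simp
    also have "\<dots> = (\<Sum>l. q k l * (if k = l then d else c) + (if l = k then q k l * c else 0))"
      by (rule suminf_add) auto
    also have "\<dots> = (\<Sum>l. q k l * c + (if l = k then q k l * d else 0))"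
      by (intro suminf_cong) (auto simp: add.commute)
    also have "\<dots> = (\<Sum>l. q k l * c) + (\<Sum>l. if l = k then q k l * d else 0)"
      by (rule suminf_add[symmetric]) auto
    also have "\<dots> = (\<Sum>l. q k l) * c + q k k * d"
      using sg[of k "\<lambda>l. q k l * d"] by simp
    finally show ?thesis .
  qed
  have "(\<Sum>k. \<Sum>l. q k l * (if k = l then d else c)) + (\<Sum>k. q k k) * c
      = (\<Sum>k. (\<Sum>l. q k l * (if k = l then d else c)) + q k k * c)"
  proof -
    have e: "(\<Sum>k. q k k) * c = (\<Sum>k. q k k * c)" by (rule ennreal_suminf_multc[symmetric])
    show ?thesis unfolding e by (intro suminf_add) auto
  qed
  also have "\<dots> = (\<Sum>k. (\<Sum>l. q k l) * c + q k k * d)"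
    using inner by simp
  also have "\<dots> = (\<Sum>k. (\<Sum>l. q k l) * c) + (\<Sum>k. q k k * d)"
    by (rule suminf_add[symmetric]) auto
  also have "\<dots> = (\<Sum>k. \<Sum>l. q k l) * c + (\<Sum>k. q k k) * d"
    by simp
  finally show ?thesis .
qed

lemma fst_borel[measurable]: "fst \<in> borel_measurable (borel :: (real \<times> real) measure)"
  using measurable_fst[of "borel::real measure" "borel::real measure"] by (simp add: borel_prod)
lemma snd_borel[measurable]: "snd \<in> borel_measurable (borel :: (real \<times> real) measure)"
  using measurable_snd[of "borel::real measure" "borel::real measure"] by (simp add: borel_prod)

lemma G0_meas_iff': "sets (G0::(real\<times>real) measure) = sets borel \<Longrightarrow> fst \<in> measurable G0 (borel::real measure)"
  by (subst measurable_cong_sets[of G0 borel]) auto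

locale cmodel =
  fixes M :: "'a measure"
    and G0 :: "(real \<times> real) measure" and P0 :: "real measure"
    and J W th ph :: "nat \<Rightarrow> 'a \<Rightarrow> real"
    and X Y :: "'a \<Rightarrow> real"
  assumes M: "prob_space M"
    and G0: "prob_space G0" "sets G0 = sets borel"
    and marg1: "distr G0 borel fst = P0" and marg2: "distr G0 borel snd = P0"
    and P0_sq: "integrable P0 (\<lambda>x. x\<^sup>2)"
    and P0_var: "(\<integral>x. (x - (\<integral>y. y \<partial>P0))\<^sup>2 \<partial>P0) > 0"
    and J_meas[measurable]: "\<And>k. J k \<in> borel_measurable M"
    and W_meas[measurable]: "\<And>k. W k \<in> borel_measurable M"
    and th_meas[measurable]: "\<And>k. th k \<in> borel_measurable M"
    and ph_meas[measurable]: "\<And>k. ph k \<in> borel_measurable M"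
    and J_nonneg: "\<And>k. AE \<omega> in M. J k \<omega> \<ge> 0"
    and W_nonneg: "\<And>k. AE \<omega> in M. W k \<omega> \<ge> 0"
    and J_sum: "AE \<omega> in M. (\<lambda>k. J k \<omega>) sums 1"
    and W_sum: "AE \<omega> in M. (\<lambda>k. W k \<omega>) sums 1"
    and JW_eqd: "\<And>k. distr M borel (J k) = distr M borel (W k)"
    and atoms_law: "\<And>k. distr M borel (\<lambda>\<omega>. (th k \<omega>, ph k \<omega>)) = G0"
    and atoms_indep: "prob_space.indep_vars M (\<lambda>_. borel) (\<lambda>k \<omega>. (th k \<omega>, ph k \<omega>)) UNIV"
    and weights_atoms_indep:
      "prob_space.indep_var M
         (Pi\<^sub>M UNIV (\<lambda>_. borel)) (\<lambda>\<omega> k. (J k \<omega>, W k \<omega>))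
         (Pi\<^sub>M UNIV (\<lambda>_. borel)) (\<lambda>\<omega> k. (th k \<omega>, ph k \<omega>))"
    and X_meas[measurable]: "X \<in> borel_measurable M" and Y_meas[measurable]: "Y \<in> borel_measurable M"
    and cond_law:
      "\<And>S B C. S \<in> sets (Pi\<^sub>M UNIV (\<lambda>_. borel :: (real \<times> real \<times> real \<times> real) measure)) \<Longrightarrow>
         B \<in> sets borel \<Longrightarrow> C \<in> sets borel \<Longrightarrow>
         measure M ({\<omega> \<in> space M. (\<lambda>k. (J k \<omega>, W k \<omega>, th k \<omega>, ph k \<omega>)) \<in> S
                                    \<and> X \<omega> \<in> B \<and> Y \<omega> \<in> C})
         = (\<integral>\<omega>. indicator {\<omega>. (\<lambda>k. (J k \<omega>, W k \<omega>, th k \<omega>, ph k \<omega>)) \<in> S} \<omega>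
                  * rand_meas (\<lambda>k. J k \<omega>) (\<lambda>k. th k \<omega>) B
                  * rand_meas (\<lambda>k. W k \<omega>) (\<lambda>k. ph k \<omega>) C \<partial>M)"
begin

sublocale prob_space M by (rule M)

lemma prob_space_P0: "prob_space P0"
  unfolding marg1[symmetric] by (rule prob_space.prob_space_distr[OF G0(1)]) (rule G0_meas_iff'[OF G0(2)])



definition F1 :: "(real \<Rightarrow> ennreal) \<Rightarrow> 'a \<Rightarrow> ennreal" where
  "F1 f \<omega> = (\<Sum>k. ennreal (J k \<omega>) * f (th k \<omega>))"
definition F2 :: "(real \<Rightarrow> ennreal) \<Rightarrow> 'a \<Rightarrow> ennreal" where
  "F2 f \<omega> = (\<Sum>k. ennreal (W k \<omega>) * f (ph k \<omega>))"

lemma AE_J: "AE \<omega> in M. (\<forall>k. 0 \<le> J k \<omega>) \<and> (\<lambda>k. J k \<omega>) sums 1"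
  using J_sum J_nonneg by (auto simp: AE_all_countable)
lemma AE_W: "AE \<omega> in M. (\<forall>k. 0 \<le> W k \<omega>) \<and> (\<lambda>k. W k \<omega>) sums 1"
  using W_sum W_nonneg by (auto simp: AE_all_countable)

lemma base:
  assumes B: "B \<in> sets borel" and C: "C \<in> sets borel"
  shows "(\<integral>\<^sup>+\<omega>. indicator B (X \<omega>) * indicator C (Y \<omega>) \<partial>M)
       = (\<integral>\<^sup>+\<omega>. F1 (indicator B) \<omega> * F2 (indicator C) \<omega> \<partial>M)"
proof -
  note [measurable] = B C
  let ?S = "UNIV :: (nat \<Rightarrow> real \<times> real \<times> real \<times> real) set"
  have "(\<integral>\<^sup>+\<omega>. indicator B (X \<omega>) * indicator C (Y \<omega>) \<partial>M)
      = (\<integral>\<^sup>+\<omega>. indicator {\<omega> \<in> space M. X \<omega> \<in> B \<and> Y \<omega> \<in> C} \<omega> \<partial>M)"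
    by (intro nn_integral_cong) (auto simp: indicator_def)
  also have "\<dots> = emeasure M {\<omega> \<in> space M. X \<omega> \<in> B \<and> Y \<omega> \<in> C}"
    using B C by (intro nn_integral_indicator) measurable
  also have "\<dots> = ennreal (measure M {\<omega> \<in> space M. X \<omega> \<in> B \<and> Y \<omega> \<in> C})"
    by (simp add: emeasure_eq_measure)
  also have "measure M {\<omega> \<in> space M. X \<omega> \<in> B \<and> Y \<omega> \<in> C}
     = (\<integral>\<omega>. rand_meas (\<lambda>k. J k \<omega>) (\<lambda>k. th k \<omega>) B * rand_meas (\<lambda>k. W k \<omega>) (\<lambda>k. ph k \<omega>) C \<partial>M)"
  proof -
    have "?S \<in> sets (Pi\<^sub>M UNIV (\<lambda>_. borel :: (real \<times> real \<times> real \<times> real) measure))"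
      using sets.top[of "Pi\<^sub>M UNIV (\<lambda>_. borel :: (real \<times> real \<times> real \<times> real) measure)"]
      by (simp add: space_PiM)
    then show ?thesis using cond_law[of ?S B C] B C by simp
  qed
  also have "ennreal \<dots> = (\<integral>\<^sup>+\<omega>. ennreal (rand_meas (\<lambda>k. J k \<omega>) (\<lambda>k. th k \<omega>) B * rand_meas (\<lambda>k. W k \<omega>) (\<lambda>k. ph k \<omega>) C) \<partial>M)"
  proof (rule nn_integral_eq_integral[symmetric])
    show "integrable M (\<lambda>\<omega>. rand_meas (\<lambda>k. J k \<omega>) (\<lambda>k. th k \<omega>) B * rand_meas (\<lambda>k. W k \<omega>) (\<lambda>k. ph k \<omega>) C)"
    proof (rule integrable_const_bound[where B=1])
      show "AE \<omega> in M. norm (rand_meas (\<lambda>k. J k \<omega>) (\<lambda>k. th k \<omega>) B * rand_meas (\<lambda>k. W k \<omega>) (\<lambda>k. ph k \<omega>) C) \<le> 1"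
        using AE_J AE_W
      proof eventually_elim
        case (elim \<omega>)
        show ?case using rm_facts(1,2)[of "\<lambda>k. J k \<omega>" "\<lambda>k. th k \<omega>" B] rm_facts(1,2)[of "\<lambda>k. W k \<omega>" "\<lambda>k. ph k \<omega>" C] elim
          by (auto simp: abs_mult intro!: mult_le_one)
      qed
    qed (unfold rand_meas_def, measurable)
    show "AE \<omega> in M. 0 \<le> rand_meas (\<lambda>k. J k \<omega>) (\<lambda>k. th k \<omega>) B * rand_meas (\<lambda>k. W k \<omega>) (\<lambda>k. ph k \<omega>) C"
      using AE_J AE_W by eventually_elim (use rm_facts(1) in auto)
  qed
  also have "\<dots> = (\<integral>\<^sup>+\<omega>. F1 (indicator B) \<omega> * F2 (indicator C) \<omega> \<partial>M)"
  proof (rule nn_integral_cong_AE)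
    show "AE \<omega> in M. ennreal (rand_meas (\<lambda>k. J k \<omega>) (\<lambda>k. th k \<omega>) B * rand_meas (\<lambda>k. W k \<omega>) (\<lambda>k. ph k \<omega>) C) = F1 (indicator B) \<omega> * F2 (indicator C) \<omega>"
      using AE_J AE_W
    proof eventually_elim
      case (elim \<omega>)
      then show ?case
        using rm_facts[of "\<lambda>k. J k \<omega>" "\<lambda>k. th k \<omega>" B] rm_facts[of "\<lambda>k. W k \<omega>" "\<lambda>k. ph k \<omega>" C]
        by (simp add: F1_def F2_def ennreal_mult)
    qed
  qed
  finally show ?thesis .
qed

lemma F1_meas[measurable]: assumes [measurable]: "f \<in> borel_measurable borel" shows "F1 f \<in> borel_measurable M"
  unfolding F1_def by measurable
lemma F2_meas[measurable]: assumes [measurable]: "f \<in> borel_measurable borel" shows "F2 f \<in> borel_measurable M"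
  unfolding F2_def by measurable

lemma law:
  assumes f[measurable]: "f \<in> borel_measurable borel" and g[measurable]: "g \<in> borel_measurable borel"
  shows "(\<integral>\<^sup>+\<omega>. f (X \<omega>) * g (Y \<omega>) \<partial>M) = (\<integral>\<^sup>+\<omega>. F1 f \<omega> * F2 g \<omega> \<partial>M)"
proof -
  have step1: "(\<integral>\<^sup>+\<omega>. indicator C (Y \<omega>) * f (X \<omega>) \<partial>M) = (\<integral>\<^sup>+\<omega>. F2 (indicator C) \<omega> * F1 f \<omega> \<partial>M)"
    if C[measurable]: "C \<in> sets borel" for C
    unfolding F1_def
  proof (rule transfer_lemma[where Z=X and \<psi>=th and w="\<lambda>k \<omega>. ennreal (J k \<omega>)"])
    show "(\<integral>\<^sup>+\<omega>. indicator C (Y \<omega>) * indicator B (X \<omega>) \<partial>M)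
       = (\<integral>\<^sup>+\<omega>. F2 (indicator C) \<omega> * (\<Sum>l. ennreal (J l \<omega>) * indicator B (th l \<omega>)) \<partial>M)"
      if "B \<in> sets borel" for B
      using base[OF that C] by (simp add: F1_def mult.commute)
  qed measurable
  show ?thesis
    unfolding F2_def
  proof (rule transfer_lemma[where Z=Y and \<psi>=ph and w="\<lambda>k \<omega>. ennreal (W k \<omega>)"])
    show "(\<integral>\<^sup>+\<omega>. f (X \<omega>) * indicator C (Y \<omega>) \<partial>M)
       = (\<integral>\<^sup>+\<omega>. F1 f \<omega> * (\<Sum>l. ennreal (W l \<omega>) * indicator C (ph l \<omega>)) \<partial>M)"
      if "C \<in> sets borel" for C
      using step1[OF that] by (simp add: F2_def mult.commute)
  qed measurable
qed

lemma law2: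
  assumes f[measurable]: "f \<in> borel_measurable borel" and g[measurable]: "g \<in> borel_measurable borel"
  shows "(\<integral>\<^sup>+\<omega>. F1 f \<omega> * F2 g \<omega> \<partial>M)
    = (\<Sum>k. \<Sum>l. \<integral>\<^sup>+\<omega>. (ennreal (J k \<omega>) * ennreal (W l \<omega>)) * (f (th k \<omega>) * g (ph l \<omega>)) \<partial>M)"
proof -
  have "\<And>\<omega>. F1 f \<omega> * F2 g \<omega> = (\<Sum>k. \<Sum>l. (ennreal (J k \<omega>) * ennreal (W l \<omega>)) * (f (th k \<omega>) * g (ph l \<omega>)))"
  proof -
    fix \<omega>
    have "F1 f \<omega> * F2 g \<omega> = (\<Sum>k. ennreal (J k \<omega>) * f (th k \<omega>) * F2 g \<omega>)"
      unfolding F1_def by (rule ennreal_suminf_multc[symmetric])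
    also have "\<dots> = (\<Sum>k. \<Sum>l. (ennreal (J k \<omega>) * f (th k \<omega>)) * (ennreal (W l \<omega>) * g (ph l \<omega>)))"
      unfolding F2_def by (intro suminf_cong) (rule ennreal_suminf_cmult[symmetric])
    also have "\<dots> = (\<Sum>k. \<Sum>l. (ennreal (J k \<omega>) * ennreal (W l \<omega>)) * (f (th k \<omega>) * g (ph l \<omega>)))"
      by (simp add: ac_simps)
    finally show "F1 f \<omega> * F2 g \<omega> = (\<Sum>k. \<Sum>l. (ennreal (J k \<omega>) * ennreal (W l \<omega>)) * (f (th k \<omega>) * g (ph l \<omega>)))" .
  qed
  then have "(\<integral>\<^sup>+\<omega>. F1 f \<omega> * F2 g \<omega> \<partial>M) = (\<integral>\<^sup>+\<omega>. (\<Sum>k. \<Sum>l. (ennreal (J k \<omega>) * ennreal (W l \<omega>)) * (f (th k \<omega>) * g (ph l \<omega>))) \<partial>M)"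
    by simp
  also have "\<dots> = (\<Sum>k. \<integral>\<^sup>+\<omega>. (\<Sum>l. (ennreal (J k \<omega>) * ennreal (W l \<omega>)) * (f (th k \<omega>) * g (ph l \<omega>))) \<partial>M)"
    by (rule nn_integral_suminf) measurable
  also have "\<dots> = (\<Sum>k. \<Sum>l. \<integral>\<^sup>+\<omega>. (ennreal (J k \<omega>) * ennreal (W l \<omega>)) * (f (th k \<omega>) * g (ph l \<omega>)) \<partial>M)"
    by (intro suminf_cong nn_integral_suminf) measurable
  finally show ?thesis .
qed

lemma indep_w_a:
  assumes f[measurable]: "f \<in> borel_measurable borel" and g[measurable]: "g \<in> borel_measurable borel"
  shows "(\<integral>\<^sup>+\<omega>. (ennreal (J k \<omega>) * ennreal (W l \<omega>)) * (f (th k \<omega>) * g (ph l \<omega>)) \<partial>M)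
     = (\<integral>\<^sup>+\<omega>. ennreal (J k \<omega>) * ennreal (W l \<omega>) \<partial>M) * (\<integral>\<^sup>+\<omega>. f (th k \<omega>) * g (ph l \<omega>) \<partial>M)"
proof -
  have "indep_var borel ((\<lambda>x. ennreal (fst (x k)) * ennreal (snd (x l))) \<circ> (\<lambda>\<omega> k. (J k \<omega>, W k \<omega>)))
                 borel ((\<lambda>x. f (fst (x k)) * g (snd (x l))) \<circ> (\<lambda>\<omega> k. (th k \<omega>, ph k \<omega>)))"
    by (rule indep_var_compose[OF weights_atoms_indep]) measurable
  then show ?thesis
    by (intro indep_var_nn_integral[OF M]) (simp add: comp_def)
qed

lemma atoms_same:
  assumes f[measurable]: "h \<in> borel_measurable (borel :: (real \<times> real) measure)"
  shows "(\<integral>\<^sup>+\<omega>. h (th k \<omega>, ph k \<omega>) \<partial>M) = (\<integral>\<^sup>+z. h z \<partial>G0)"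
proof -
  have "(\<integral>\<^sup>+z. h z \<partial>G0) = (\<integral>\<^sup>+z. h z \<partial>distr M borel (\<lambda>\<omega>. (th k \<omega>, ph k \<omega>)))"
    using atoms_law[of k] by simp
  also have "\<dots> = (\<integral>\<^sup>+\<omega>. h (th k \<omega>, ph k \<omega>) \<partial>M)"
    by (rule nn_integral_distr) measurable
  finally show ?thesis by simp
qed

lemma G0_meas_iff: "f \<in> measurable G0 N \<longleftrightarrow> f \<in> measurable borel N"
  by (simp add: measurable_cong_sets[OF G0(2) refl])

lemma fst_G0: "(\<integral>\<^sup>+z. f (fst z) \<partial>G0) = (\<integral>\<^sup>+x. f x \<partial>P0)" if [measurable]: "f \<in> borel_measurable borel"
proof -
  have "(\<integral>\<^sup>+x. f x \<partial>P0) = (\<integral>\<^sup>+x. f x \<partial>distr G0 borel fst)" using marg1 by simp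
  also have "\<dots> = (\<integral>\<^sup>+z. f (fst z) \<partial>G0)"
    by (rule nn_integral_distr) (auto simp: G0_meas_iff)
  finally show ?thesis by simp
qed

lemma snd_G0: "(\<integral>\<^sup>+z. f (snd z) \<partial>G0) = (\<integral>\<^sup>+x. f x \<partial>P0)" if [measurable]: "f \<in> borel_measurable borel"
proof -
  have "(\<integral>\<^sup>+x. f x \<partial>P0) = (\<integral>\<^sup>+x. f x \<partial>distr G0 borel snd)" using marg2 by simp
  also have "\<dots> = (\<integral>\<^sup>+z. f (snd z) \<partial>G0)"
    by (rule nn_integral_distr) (auto simp: G0_meas_iff)
  finally show ?thesis by simp
qed

lemma atoms_diff:
  assumes f[measurable]: "f \<in> borel_measurable borel" and g[measurable]: "g \<in> borel_measurable borel"
    and kl: "k \<noteq> l"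
  shows "(\<integral>\<^sup>+\<omega>. f (th k \<omega>) * g (ph l \<omega>) \<partial>M) = (\<integral>\<^sup>+x. f x \<partial>P0) * (\<integral>\<^sup>+x. g x \<partial>P0)"
proof -
  have "indep_var (Pi\<^sub>M {k} (\<lambda>_. borel)) (\<lambda>\<omega>. restrict (\<lambda>i. (th i \<omega>, ph i \<omega>)) {k})
                  (Pi\<^sub>M {l} (\<lambda>_. borel)) (\<lambda>\<omega>. restrict (\<lambda>i. (th i \<omega>, ph i \<omega>)) {l})"
    by (rule indep_var_restrict[OF atoms_indep]) (use kl in auto)
  then have "indep_var borel ((\<lambda>x. f (fst (x k))) \<circ> (\<lambda>\<omega>. restrict (\<lambda>i. (th i \<omega>, ph i \<omega>)) {k}))
                 borel ((\<lambda>x. g (snd (x l))) \<circ> (\<lambda>\<omega>. restrict (\<lambda>i. (th i \<omega>, ph i \<omega>)) {l}))"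
    by (rule indep_var_compose) measurable
  then have "(\<integral>\<^sup>+\<omega>. f (th k \<omega>) * g (ph l \<omega>) \<partial>M) = (\<integral>\<^sup>+\<omega>. f (th k \<omega>) \<partial>M) * (\<integral>\<^sup>+\<omega>. g (ph l \<omega>) \<partial>M)"
    by (intro indep_var_nn_integral[OF M]) (simp add: comp_def)
  also have "(\<integral>\<^sup>+\<omega>. f (th k \<omega>) \<partial>M) = (\<integral>\<^sup>+x. f x \<partial>P0)"
    using atoms_same[of "\<lambda>z. f (fst z)" k] fst_G0[of f] by simp
  also have "(\<integral>\<^sup>+\<omega>. g (ph l \<omega>) \<partial>M) = (\<integral>\<^sup>+x. g x \<partial>P0)"
    using atoms_same[of "\<lambda>z. g (snd z)" l] snd_G0[of g] by simp
  finally show ?thesis .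
qed

definition q where "q k l = (\<integral>\<^sup>+\<omega>. ennreal (J k \<omega>) * ennreal (W l \<omega>) \<partial>M)"

lemma law3:
  assumes f[measurable]: "f \<in> borel_measurable borel" and g[measurable]: "g \<in> borel_measurable borel"
  shows "(\<integral>\<^sup>+\<omega>. f (X \<omega>) * g (Y \<omega>) \<partial>M) = (\<Sum>k. \<Sum>l. q k l *
     (if k = l then (\<integral>\<^sup>+z. f (fst z) * g (snd z) \<partial>G0) else (\<integral>\<^sup>+x. f x \<partial>P0) * (\<integral>\<^sup>+x. g x \<partial>P0)))"
proof -
  have hm: "(\<lambda>z. f (fst z) * g (snd z)) \<in> borel_measurable borel" by measurable
  show ?thesis
  unfolding law[OF f g] law2[OF f g] indep_w_a[OF f g] q_def
  by (intro suminf_cong) (auto simp: atoms_diff atoms_same[OF hm, simplified])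
qed

lemma qsum: "(\<Sum>k. \<Sum>l. q k l) = 1"
proof -
  have a: "(\<integral>\<^sup>+z. 1 \<partial>G0) = 1" using prob_space.emeasure_space_1[OF G0(1)] by simp
  have b: "(\<integral>\<^sup>+z. 1 \<partial>P0) = 1" using prob_space.emeasure_space_1[OF prob_space_P0] by simp
  have c: "(\<integral>\<^sup>+z. 1 \<partial>M) = 1" using emeasure_space_1 by simp
  have l: "(\<integral>\<^sup>+\<omega>. (\<lambda>_. 1::ennreal) (X \<omega>) * (\<lambda>_. 1::ennreal) (Y \<omega>) \<partial>M) = (\<Sum>k. \<Sum>l. q k l *
     (if k = l then (\<integral>\<^sup>+z. (\<lambda>_. 1::ennreal) (fst z) * (\<lambda>_. 1::ennreal) (snd z) \<partial>G0) else (\<integral>\<^sup>+x. (\<lambda>_. 1::ennreal) x \<partial>P0) * (\<integral>\<^sup>+x. (\<lambda>_. 1::ennreal) x \<partial>P0)))"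
    by (rule law3) auto
  have "(\<Sum>k. \<Sum>l. q k l) = (\<Sum>k. \<Sum>l. q k l *
     (if k = l then (\<integral>\<^sup>+z. (\<lambda>_. 1::ennreal) (fst z) * (\<lambda>_. 1::ennreal) (snd z) \<partial>G0) else (\<integral>\<^sup>+x. (\<lambda>_. 1::ennreal) x \<partial>P0) * (\<integral>\<^sup>+x. (\<lambda>_. 1::ennreal) x \<partial>P0)))"
    by (simp only: a b mult_1_right if_cancel)
  also have "\<dots> = 1" using l c by simp
  finally show ?thesis .
qed
lemma dummy: True
  by (simp add: nn_integral_const emeasure_space_1 prob_space.emeasure_space_1[OF G0(1)]
    prob_space.emeasure_space_1[OF prob_space_P0])

lemma key:
  assumes f[measurable]: "f \<in> borel_measurable borel" and g[measurable]: "g \<in> borel_measurable borel"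
  shows "(\<integral>\<^sup>+\<omega>. f (X \<omega>) * g (Y \<omega>) \<partial>M) + (\<Sum>k. q k k) * ((\<integral>\<^sup>+x. f x \<partial>P0) * (\<integral>\<^sup>+x. g x \<partial>P0))
    = (\<integral>\<^sup>+x. f x \<partial>P0) * (\<integral>\<^sup>+x. g x \<partial>P0) + (\<Sum>k. q k k) * (\<integral>\<^sup>+z. f (fst z) * g (snd z) \<partial>G0)"
  unfolding law3[OF f g] dsum qsum by simp

lemma J_le1: "AE \<omega> in M. \<forall>k. 0 \<le> J k \<omega> \<and> J k \<omega> \<le> 1"
  using AE_J
proof eventually_elim
  case (elim \<omega>)
  show ?case
  proof
    fix k
    have "sum (\<lambda>k. J k \<omega>) {k} \<le> (\<Sum>k. J k \<omega>)"
      by (rule sum_le_suminf) (use elim in \<open>auto simp: sums_iff\<close>)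
    then show "0 \<le> J k \<omega> \<and> J k \<omega> \<le> 1" using elim by (auto simp: sums_iff)
  qed
qed

lemma W_le1: "AE \<omega> in M. \<forall>k. 0 \<le> W k \<omega> \<and> W k \<omega> \<le> 1"
  using AE_W
proof eventually_elim
  case (elim \<omega>)
  show ?case
  proof
    fix k
    have "sum (\<lambda>k. W k \<omega>) {k} \<le> (\<Sum>k. W k \<omega>)"
      by (rule sum_le_suminf) (use elim in \<open>auto simp: sums_iff\<close>)
    then show "0 \<le> W k \<omega> \<and> W k \<omega> \<le> 1" using elim by (auto simp: sums_iff)
  qed
qed

lemma int_JW: "integrable M (\<lambda>\<omega>. J k \<omega> * W l \<omega>)"
proof (rule integrable_const_bound[where B=1])
  show "AE \<omega> in M. norm (J k \<omega> * W l \<omega>) \<le> 1"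
    using J_le1 W_le1 by eventually_elim (auto simp: abs_mult intro!: mult_le_one)
qed measurable

lemma q_real: "q k l = ennreal (\<integral>\<omega>. J k \<omega> * W l \<omega> \<partial>M)"
proof -
  have "q k l = (\<integral>\<^sup>+\<omega>. ennreal (J k \<omega> * W l \<omega>) \<partial>M)"
    unfolding q_def
    by (rule nn_integral_cong_AE) (use J_le1 W_le1 in \<open>eventually_elim, auto simp: ennreal_mult\<close>)
  also have "\<dots> = ennreal (\<integral>\<omega>. J k \<omega> * W l \<omega> \<partial>M)"
    by (rule nn_integral_eq_integral[OF int_JW]) (use J_le1 W_le1 in \<open>eventually_elim, auto\<close>)
  finally show ?thesis .
qed

definition pi where "pi = (\<Sum>k. \<integral>\<omega>. J k \<omega> * W k \<omega> \<partial>M)"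

lemma int_JW_nonneg: "0 \<le> (\<integral>\<omega>. J k \<omega> * W l \<omega> \<partial>M)"
  by (rule integral_nonneg_AE) (use J_le1 W_le1 in \<open>eventually_elim, auto\<close>)

lemma Dq_le1: "(\<Sum>k. q k k) \<le> 1"
proof -
  have "(\<Sum>k. q k k) \<le> (\<Sum>k. \<Sum>l. q k l)"
  proof (rule suminf_le)
    fix k
    have "sum (\<lambda>l. q k l) {k} \<le> (\<Sum>l. q k l)"
      by (rule sum_le_suminf) auto
    then show "q k k \<le> (\<Sum>l. q k l)" by simp
  qed auto
  then show ?thesis using qsum by simp
qed

lemma pi_summable: "summable (\<lambda>k. \<integral>\<omega>. J k \<omega> * W k \<omega> \<partial>M)"
  and Dq_pi: "(\<Sum>k. q k k) = ennreal pi"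
proof -
  have ne: "(\<Sum>k. ennreal (\<integral>\<omega>. J k \<omega> * W k \<omega> \<partial>M)) \<noteq> top"
    using Dq_le1 unfolding q_real by (auto simp: top_unique)
  show "summable (\<lambda>k. \<integral>\<omega>. J k \<omega> * W k \<omega> \<partial>M)"
    by (rule summable_suminf_not_top[OF int_JW_nonneg ne])
  show "(\<Sum>k. q k k) = ennreal pi"
    unfolding q_real pi_def using ne int_JW_nonneg by (simp add: suminf_ennreal)
qed

lemma pi_nonneg: "0 \<le> pi"
  unfolding pi_def by (rule suminf_nonneg[OF pi_summable int_JW_nonneg])

lemma pi_le1: "pi \<le> 1"
  using Dq_le1 Dq_pi by simp

lemma real_key:
  fixes h1 h2 :: "real \<Rightarrow> real"
  assumes h1[measurable]: "h1 \<in> borel_measurable borel" and h2[measurable]: "h2 \<in> borel_measurable borel"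
    and n1: "\<And>x. 0 \<le> h1 x" and n2: "\<And>x. 0 \<le> h2 x"
    and i1: "integrable P0 h1" and i2: "integrable P0 h2"
    and i12: "integrable G0 (\<lambda>z. h1 (fst z) * h2 (snd z))"
  shows "integrable M (\<lambda>\<omega>. h1 (X \<omega>) * h2 (Y \<omega>))"
    "(\<integral>\<omega>. h1 (X \<omega>) * h2 (Y \<omega>) \<partial>M) + pi * ((\<integral>x. h1 x \<partial>P0) * (\<integral>x. h2 x \<partial>P0))
      = (\<integral>x. h1 x \<partial>P0) * (\<integral>x. h2 x \<partial>P0) + pi * (\<integral>z. h1 (fst z) * h2 (snd z) \<partial>G0)"
proof -
  let ?a = "\<integral>x. h1 x \<partial>P0" and ?b = "\<integral>x. h2 x \<partial>P0" and ?d = "\<integral>z. h1 (fst z) * h2 (snd z) \<partial>G0"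
  have fm: "(\<lambda>x. ennreal (h1 x)) \<in> borel_measurable borel" "(\<lambda>x. ennreal (h2 x)) \<in> borel_measurable borel"
    by measurable
  have A: "(\<integral>\<^sup>+x. ennreal (h1 x) \<partial>P0) = ennreal ?a"
    by (rule nn_integral_eq_integral[OF i1]) (simp add: n1)
  have B: "(\<integral>\<^sup>+x. ennreal (h2 x) \<partial>P0) = ennreal ?b"
    by (rule nn_integral_eq_integral[OF i2]) (simp add: n2)
  have D: "(\<integral>\<^sup>+z. ennreal (h1 (fst z)) * ennreal (h2 (snd z)) \<partial>G0) = ennreal ?d"
  proof -
    have "(\<integral>\<^sup>+z. ennreal (h1 (fst z)) * ennreal (h2 (snd z)) \<partial>G0) = (\<integral>\<^sup>+z. ennreal (h1 (fst z) * h2 (snd z)) \<partial>G0)"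
      by (simp add: ennreal_mult n1 n2)
    also have "\<dots> = ennreal ?d"
      by (rule nn_integral_eq_integral[OF i12]) (simp add: n1 n2)
    finally show ?thesis .
  qed
  have k: "(\<integral>\<^sup>+\<omega>. ennreal (h1 (X \<omega>)) * ennreal (h2 (Y \<omega>)) \<partial>M) + ennreal pi * (ennreal ?a * ennreal ?b)
      = ennreal ?a * ennreal ?b + ennreal pi * ennreal ?d"
    using key[OF fm] unfolding A B D Dq_pi .
  have L: "(\<integral>\<^sup>+\<omega>. ennreal (h1 (X \<omega>)) * ennreal (h2 (Y \<omega>)) \<partial>M) = (\<integral>\<^sup>+\<omega>. ennreal (h1 (X \<omega>) * h2 (Y \<omega>)) \<partial>M)"
    by (simp add: ennreal_mult n1 n2)
  have fin: "(\<integral>\<^sup>+\<omega>. ennreal (h1 (X \<omega>) * h2 (Y \<omega>)) \<partial>M) \<noteq> top"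
  proof
    assume "(\<integral>\<^sup>+\<omega>. ennreal (h1 (X \<omega>) * h2 (Y \<omega>)) \<partial>M) = top"
    then have "ennreal ?a * ennreal ?b + ennreal pi * ennreal ?d = top" using k L by simp
    then show False by (simp add: ennreal_mult_eq_top_iff)
  qed
  then obtain r where r: "(\<integral>\<^sup>+\<omega>. ennreal (h1 (X \<omega>) * h2 (Y \<omega>)) \<partial>M) = ennreal r" "0 \<le> r"
    by (cases "(\<integral>\<^sup>+\<omega>. ennreal (h1 (X \<omega>) * h2 (Y \<omega>)) \<partial>M)") auto
  show int: "integrable M (\<lambda>\<omega>. h1 (X \<omega>) * h2 (Y \<omega>))"
    by (rule integrableI_nn_integral_finite[OF _ _ r(1)]) (auto simp: n1 n2)
  have "ennreal (\<integral>\<omega>. h1 (X \<omega>) * h2 (Y \<omega>) \<partial>M) = (\<integral>\<^sup>+\<omega>. ennreal (h1 (X \<omega>) * h2 (Y \<omega>)) \<partial>M)"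
    by (rule nn_integral_eq_integral[OF int, symmetric]) (simp add: n1 n2)
  then have "ennreal (\<integral>\<omega>. h1 (X \<omega>) * h2 (Y \<omega>) \<partial>M) + ennreal pi * (ennreal ?a * ennreal ?b)
      = ennreal ?a * ennreal ?b + ennreal pi * ennreal ?d"
    using k L by simp
  moreover have "0 \<le> ?a" "0 \<le> ?b" "0 \<le> ?d" "0 \<le> (\<integral>\<omega>. h1 (X \<omega>) * h2 (Y \<omega>) \<partial>M)"
    by (auto intro!: integral_nonneg simp: n1 n2)
  ultimately have "ennreal ((\<integral>\<omega>. h1 (X \<omega>) * h2 (Y \<omega>) \<partial>M) + pi * (?a * ?b)) = ennreal (?a * ?b + pi * ?d)"
    using pi_nonneg by (simp add: ennreal_mult ennreal_plus)
  then show "(\<integral>\<omega>. h1 (X \<omega>) * h2 (Y \<omega>) \<partial>M) + pi * (?a * ?b) = ?a * ?b + pi * ?d"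
    using pi_nonneg \<open>0 \<le> ?a\<close> \<open>0 \<le> ?b\<close> \<open>0 \<le> ?d\<close> \<open>0 \<le> (\<integral>\<omega>. h1 (X \<omega>) * h2 (Y \<omega>) \<partial>M)\<close>
    by (subst (asm) ennreal_inj) auto
qed

definition mu where "mu = (\<integral>x. x \<partial>P0)"
definition sig where "sig = (\<integral>x. (x - mu)\<^sup>2 \<partial>P0)"
definition up where "up x = max (x - mu) 0"
definition dn where "dn x = max (mu - x) 0"
definition cv where "cv = (\<integral>z. (fst z - mu) * (snd z - mu) \<partial>G0)"

lemma up_meas[measurable]: "up \<in> borel_measurable borel" unfolding up_def by measurable
lemma dn_meas[measurable]: "dn \<in> borel_measurable borel" unfolding dn_def by measurable

lemma sig_pos: "0 < sig" using P0_var unfolding sig_def mu_def .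

interpretation P: prob_space P0 by (rule prob_space_P0)
interpretation G: prob_space G0 by (rule G0(1))

lemma sets_P0[measurable_cong]: "sets P0 = sets borel"
  unfolding marg1[symmetric] by simp

lemma iP_x: "integrable P0 (\<lambda>x. x)"
  by (rule P.square_integrable_imp_integrable) (use P0_sq in auto)

lemma iP_c: "integrable P0 (\<lambda>x. x - mu)"
  using iP_x by auto

lemma iP_sq: "integrable P0 (\<lambda>x. (x - mu)\<^sup>2)"
proof -
  have e: "(\<lambda>x. (x - mu)\<^sup>2) = (\<lambda>x. x\<^sup>2 - 2 * mu * x + mu\<^sup>2)"
    by (auto simp: power2_eq_square algebra_simps)
  show ?thesis unfolding e using P0_sq iP_x by auto
qed

lemma iP_bound1: "integrable P0 h" if [measurable]: "h \<in> borel_measurable borel" and "\<And>x. \<bar>h x\<bar> \<le> \<bar>x - mu\<bar>"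
  by (rule Bochner_Integration.integrable_bound[OF iP_c]) (use that in auto)

lemma iP_bound2: "integrable P0 h" if [measurable]: "h \<in> borel_measurable borel" and "\<And>x. \<bar>h x\<bar> \<le> (x - mu)\<^sup>2"
  by (rule Bochner_Integration.integrable_bound[OF iP_sq]) (use that in auto)

lemma up_b: "\<bar>up x\<bar> \<le> \<bar>x - mu\<bar>" and dn_b: "\<bar>dn x\<bar> \<le> \<bar>x - mu\<bar>"
  and up_nn: "0 \<le> up x" and dn_nn: "0 \<le> dn x"
  and ud: "up x - dn x = x - mu"
  by (auto simp: up_def dn_def max_def)

lemma ud2: "(up x)\<^sup>2 + (dn x)\<^sup>2 = (x - mu)\<^sup>2"
proof (cases "mu \<le> x")
  case True then show ?thesis by (simp add: up_def dn_def)
next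
  case False
  then have "(mu - x)\<^sup>2 = (x - mu)\<^sup>2" by (simp add: power2_commute)
  then show ?thesis using False by (simp add: up_def dn_def)
qed

lemma up2_b: "\<bar>(up x)\<^sup>2\<bar> \<le> (x - mu)\<^sup>2" and dn2_b: "\<bar>(dn x)\<^sup>2\<bar> \<le> (x - mu)\<^sup>2"
proof -
  have "0 \<le> (up x)\<^sup>2" "0 \<le> (dn x)\<^sup>2" by simp_all
  then show "\<bar>(up x)\<^sup>2\<bar> \<le> (x - mu)\<^sup>2" "\<bar>(dn x)\<^sup>2\<bar> \<le> (x - mu)\<^sup>2"
    using ud2[of x] by (simp_all only: abs_of_nonneg)
qed

lemma fst_G0_meas[measurable]: "fst \<in> measurable G0 borel" by (simp add: G0_meas_iff)
lemma snd_G0_meas[measurable]: "snd \<in> measurable G0 borel" by (simp add: G0_meas_iff)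

lemma G_fst: fixes h :: "real \<Rightarrow> real" assumes [measurable]: "h \<in> borel_measurable borel" and i: "integrable P0 h"
  shows "integrable G0 (\<lambda>z. h (fst z))" "(\<integral>z. h (fst z) \<partial>G0) = (\<integral>x. h x \<partial>P0)"
proof -
  show "integrable G0 (\<lambda>z. h (fst z))"
    using integrable_distr_eq[of fst G0 borel h] i unfolding marg1[symmetric] by simp
  show "(\<integral>z. h (fst z) \<partial>G0) = (\<integral>x. h x \<partial>P0)"
    unfolding marg1[symmetric] by (subst integral_distr) auto
qed

lemma G_snd: fixes h :: "real \<Rightarrow> real" assumes [measurable]: "h \<in> borel_measurable borel" and i: "integrable P0 h"
  shows "integrable G0 (\<lambda>z. h (snd z))" "(\<integral>z. h (snd z) \<partial>G0) = (\<integral>x. h x \<partial>P0)"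
proof -
  show "integrable G0 (\<lambda>z. h (snd z))"
    using integrable_distr_eq[of snd G0 borel h] i unfolding marg2[symmetric] by simp
  show "(\<integral>z. h (snd z) \<partial>G0) = (\<integral>x. h x \<partial>P0)"
    unfolding marg2[symmetric] by (subst integral_distr) auto
qed

lemma G_prod: assumes [measurable]: "h1 \<in> borel_measurable borel" "h2 \<in> borel_measurable borel"
  and b1: "\<And>x. \<bar>h1 x\<bar> \<le> \<bar>x - mu\<bar>" and b2: "\<And>x. \<bar>h2 x\<bar> \<le> \<bar>x - mu\<bar>"
  shows "integrable G0 (\<lambda>z. h1 (fst z) * h2 (snd z))"
proof -
  have i: "integrable G0 (\<lambda>z. (fst z - mu)\<^sup>2 + (snd z - mu)\<^sup>2)"
    using G_fst(1)[of "\<lambda>x. (x - mu)\<^sup>2"] G_snd(1)[of "\<lambda>x. (x - mu)\<^sup>2"] iP_sq by auto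
  show ?thesis
  proof (rule Bochner_Integration.integrable_bound[OF i])
    show "AE z in G0. norm (h1 (fst z) * h2 (snd z)) \<le> norm ((fst z - mu)\<^sup>2 + (snd z - mu)\<^sup>2)"
    proof (rule AE_I2)
      fix z :: "real \<times> real"
      have "\<bar>h1 (fst z) * h2 (snd z)\<bar> \<le> \<bar>fst z - mu\<bar> * \<bar>snd z - mu\<bar>"
        unfolding abs_mult by (intro mult_mono b1 b2) auto
      also have "\<dots> \<le> (fst z - mu)\<^sup>2 + (snd z - mu)\<^sup>2"
      proof -
        have "2 * \<bar>fst z - mu\<bar> * \<bar>snd z - mu\<bar> \<le> \<bar>fst z - mu\<bar>\<^sup>2 + \<bar>snd z - mu\<bar>\<^sup>2"
          by (rule sum_squares_bound)
        moreover have "0 \<le> \<bar>fst z - mu\<bar> * \<bar>snd z - mu\<bar>" by simp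
        ultimately show ?thesis by (simp only: power2_abs)
      qed
      finally show "norm (h1 (fst z) * h2 (snd z)) \<le> norm ((fst z - mu)\<^sup>2 + (snd z - mu)\<^sup>2)"
        by simp
    qed
  qed measurable
qed

lemma one_facts: "(\<lambda>_. 1::real) \<in> borel_measurable borel" "\<And>x::real. 0 \<le> (\<lambda>_. 1::real) x"
  "integrable P0 (\<lambda>_. 1::real)"
  by auto

lemma EX: fixes h :: "real \<Rightarrow> real" assumes hm[measurable]: "h \<in> borel_measurable borel" and n: "\<And>x. 0 \<le> h x" and i: "integrable P0 h"
  shows "integrable M (\<lambda>\<omega>. h (X \<omega>))" "(\<integral>\<omega>. h (X \<omega>) \<partial>M) = (\<integral>x. h x \<partial>P0)"
proof -
  have i12: "integrable G0 (\<lambda>z. h (fst z) * (\<lambda>_. 1) (snd z))"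
    using G_fst(1)[OF hm i] by simp
  note rk = real_key[OF hm one_facts(1) n one_facts(2) i one_facts(3) i12]
  show "integrable M (\<lambda>\<omega>. h (X \<omega>))" using rk(1) by simp
  have g: "(\<integral>z. h (fst z) * (\<lambda>_. 1) (snd z) \<partial>G0) = (\<integral>x. h x \<partial>P0)"
    using G_fst(2)[OF hm i] by simp
  show "(\<integral>\<omega>. h (X \<omega>) \<partial>M) = (\<integral>x. h x \<partial>P0)" using rk(2) unfolding g by (simp add: P.prob_space)
qed

lemma EY: fixes h :: "real \<Rightarrow> real" assumes hm[measurable]: "h \<in> borel_measurable borel" and n: "\<And>x. 0 \<le> h x" and i: "integrable P0 h"
  shows "integrable M (\<lambda>\<omega>. h (Y \<omega>))" "(\<integral>\<omega>. h (Y \<omega>) \<partial>M) = (\<integral>x. h x \<partial>P0)"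
proof -
  have i12: "integrable G0 (\<lambda>z. (\<lambda>_. 1) (fst z) * h (snd z))"
    using G_snd(1)[OF hm i] by simp
  note rk = real_key[OF one_facts(1) hm one_facts(2) n one_facts(3) i i12]
  show "integrable M (\<lambda>\<omega>. h (Y \<omega>))" using rk(1) by simp
  have g: "(\<integral>z. (\<lambda>_. 1) (fst z) * h (snd z) \<partial>G0) = (\<integral>x. h x \<partial>P0)"
    using G_snd(2)[OF hm i] by simp
  show "(\<integral>\<omega>. h (Y \<omega>) \<partial>M) = (\<integral>x. h x \<partial>P0)" using rk(2) unfolding g by (simp add: P.prob_space)
qed

lemma i_up: "integrable P0 up" by (rule iP_bound1[OF up_meas up_b])
lemma i_dn: "integrable P0 dn" by (rule iP_bound1[OF dn_meas dn_b])
lemma up2_meas[measurable]: "(\<lambda>x. (up x)\<^sup>2) \<in> borel_measurable borel" by measurable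
lemma dn2_meas[measurable]: "(\<lambda>x. (dn x)\<^sup>2) \<in> borel_measurable borel" by measurable
lemma i_up2: "integrable P0 (\<lambda>x. (up x)\<^sup>2)" by (rule iP_bound2[OF up2_meas up2_b])
lemma i_dn2: "integrable P0 (\<lambda>x. (dn x)\<^sup>2)" by (rule iP_bound2[OF dn2_meas dn2_b])

lemma int_c: "(\<integral>x. x - mu \<partial>P0) = 0"
  using iP_x by (simp add: mu_def P.prob_space)

lemma up_dn_eq: "(\<integral>x. dn x \<partial>P0) = (\<integral>x. up x \<partial>P0)"
proof -
  have "(\<integral>x. up x \<partial>P0) - (\<integral>x. dn x \<partial>P0) = (\<integral>x. up x - dn x \<partial>P0)"
    using i_up i_dn by simp
  also have "\<dots> = 0" unfolding ud by (rule int_c)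
  finally show ?thesis by simp
qed

lemma sig_ud: "sig = (\<integral>x. (up x)\<^sup>2 \<partial>P0) + (\<integral>x. (dn x)\<^sup>2 \<partial>P0)"
proof -
  have "(\<integral>x. (up x)\<^sup>2 \<partial>P0) + (\<integral>x. (dn x)\<^sup>2 \<partial>P0) = (\<integral>x. (up x)\<^sup>2 + (dn x)\<^sup>2 \<partial>P0)"
    using i_up2 i_dn2 by simp
  then show ?thesis unfolding ud2 sig_def by simp
qed

lemma X_mom: "integrable M X" "(\<integral>\<omega>. X \<omega> \<partial>M) = mu"
  "integrable M (\<lambda>\<omega>. (X \<omega> - mu)\<^sup>2)" "(\<integral>\<omega>. (X \<omega> - mu)\<^sup>2 \<partial>M) = sig"
proof -
  note u = EX[OF up_meas up_nn i_up] and d = EX[OF dn_meas dn_nn i_dn]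
  note u2 = EX[OF up2_meas _ i_up2] and d2 = EX[OF dn2_meas _ i_dn2]
  have eX: "X = (\<lambda>\<omega>. (up (X \<omega>) - dn (X \<omega>)) + mu)" using ud by (auto simp: fun_eq_iff)
  show iX: "integrable M X" by (subst eX) (use u(1) d(1) in auto)
  have "(\<integral>\<omega>. X \<omega> \<partial>M) = (\<integral>\<omega>. (up (X \<omega>) - dn (X \<omega>)) + mu \<partial>M)" by (subst eX) simp
  also have "\<dots> = (\<integral>x. up x \<partial>P0) - (\<integral>x. dn x \<partial>P0) + mu"
    using u d by (simp add: prob_space)
  finally show "(\<integral>\<omega>. X \<omega> \<partial>M) = mu" using up_dn_eq by simp
  have e2: "(\<lambda>\<omega>. (X \<omega> - mu)\<^sup>2) = (\<lambda>\<omega>. (up (X \<omega>))\<^sup>2 + (dn (X \<omega>))\<^sup>2)" using ud2 by (auto simp: fun_eq_iff)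
  show "integrable M (\<lambda>\<omega>. (X \<omega> - mu)\<^sup>2)" unfolding e2 using u2(1) d2(1) by auto
  show "(\<integral>\<omega>. (X \<omega> - mu)\<^sup>2 \<partial>M) = sig" unfolding e2 sig_ud using u2 d2 by simp
qed

lemma Y_mom: "integrable M Y" "(\<integral>\<omega>. Y \<omega> \<partial>M) = mu"
  "integrable M (\<lambda>\<omega>. (Y \<omega> - mu)\<^sup>2)" "(\<integral>\<omega>. (Y \<omega> - mu)\<^sup>2 \<partial>M) = sig"
proof -
  note u = EY[OF up_meas up_nn i_up] and d = EY[OF dn_meas dn_nn i_dn]
  note u2 = EY[OF up2_meas _ i_up2] and d2 = EY[OF dn2_meas _ i_dn2]
  have eX: "Y = (\<lambda>\<omega>. (up (Y \<omega>) - dn (Y \<omega>)) + mu)" using ud by (auto simp: fun_eq_iff)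
  show iX: "integrable M Y" by (subst eX) (use u(1) d(1) in auto)
  have "(\<integral>\<omega>. Y \<omega> \<partial>M) = (\<integral>\<omega>. (up (Y \<omega>) - dn (Y \<omega>)) + mu \<partial>M)" by (subst eX) simp
  also have "\<dots> = (\<integral>x. up x \<partial>P0) - (\<integral>x. dn x \<partial>P0) + mu"
    using u d by (simp add: prob_space)
  finally show "(\<integral>\<omega>. Y \<omega> \<partial>M) = mu" using up_dn_eq by simp
  have e2: "(\<lambda>\<omega>. (Y \<omega> - mu)\<^sup>2) = (\<lambda>\<omega>. (up (Y \<omega>))\<^sup>2 + (dn (Y \<omega>))\<^sup>2)" using ud2 by (auto simp: fun_eq_iff)
  show "integrable M (\<lambda>\<omega>. (Y \<omega> - mu)\<^sup>2)" unfolding e2 using u2(1) d2(1) by auto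
  show "(\<integral>\<omega>. (Y \<omega> - mu)\<^sup>2 \<partial>M) = sig" unfolding e2 sig_ud using u2 d2 by simp
qed

definition alpha where "alpha = (\<integral>x. up x \<partial>P0)"

lemma rk_ud:
  assumes h1: "h1 = up \<or> h1 = dn" and h2: "h2 = up \<or> h2 = dn"
  shows "integrable M (\<lambda>\<omega>. h1 (X \<omega>) * h2 (Y \<omega>))"
    "(\<integral>\<omega>. h1 (X \<omega>) * h2 (Y \<omega>) \<partial>M) = alpha * alpha + pi * (\<integral>z. h1 (fst z) * h2 (snd z) \<partial>G0) - pi * (alpha * alpha)"
proof -
  have m1: "h1 \<in> borel_measurable borel" and m2: "h2 \<in> borel_measurable borel"
    using h1 h2 by auto
  have n1: "\<And>x. 0 \<le> h1 x" and n2: "\<And>x. 0 \<le> h2 x" using h1 h2 up_nn dn_nn by auto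
  have i1: "integrable P0 h1" and i2: "integrable P0 h2" using h1 h2 i_up i_dn by auto
  have a1: "(\<integral>x. h1 x \<partial>P0) = alpha" and a2: "(\<integral>x. h2 x \<partial>P0) = alpha"
    using h1 h2 up_dn_eq unfolding alpha_def by auto
  have b1: "\<And>x. \<bar>h1 x\<bar> \<le> \<bar>x - mu\<bar>" and b2: "\<And>x. \<bar>h2 x\<bar> \<le> \<bar>x - mu\<bar>"
    using h1 h2 up_b dn_b by auto
  have i12: "integrable G0 (\<lambda>z. h1 (fst z) * h2 (snd z))"
    by (rule G_prod[OF m1 m2 b1 b2])
  note rk = real_key[OF m1 m2 n1 n2 i1 i2 i12]
  show "integrable M (\<lambda>\<omega>. h1 (X \<omega>) * h2 (Y \<omega>))" by (rule rk(1))
  show "(\<integral>\<omega>. h1 (X \<omega>) * h2 (Y \<omega>) \<partial>M) = alpha * alpha + pi * (\<integral>z. h1 (fst z) * h2 (snd z) \<partial>G0) - pi * (alpha * alpha)"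
    using rk(2) unfolding a1 a2 by simp
qed

lemma cross: "(\<integral>\<omega>. (X \<omega> - mu) * (Y \<omega> - mu) \<partial>M) = pi * cv"
proof -
  note uu = rk_ud[OF disjI1[OF refl] disjI1[OF refl]] and ud' = rk_ud[OF disjI1[OF refl] disjI2[OF refl]]
    and du = rk_ud[OF disjI2[OF refl] disjI1[OF refl]] and dd = rk_ud[OF disjI2[OF refl] disjI2[OF refl]]
  have e: "(\<lambda>\<omega>. (X \<omega> - mu) * (Y \<omega> - mu)) = (\<lambda>\<omega>. up (X \<omega>) * up (Y \<omega>) - up (X \<omega>) * dn (Y \<omega>)
     - dn (X \<omega>) * up (Y \<omega>) + dn (X \<omega>) * dn (Y \<omega>))"
    by (auto simp: fun_eq_iff ud[symmetric] algebra_simps)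
  have "(\<integral>\<omega>. (X \<omega> - mu) * (Y \<omega> - mu) \<partial>M) =
     (\<integral>\<omega>. up (X \<omega>) * up (Y \<omega>) \<partial>M) - (\<integral>\<omega>. up (X \<omega>) * dn (Y \<omega>) \<partial>M)
     - (\<integral>\<omega>. dn (X \<omega>) * up (Y \<omega>) \<partial>M) + (\<integral>\<omega>. dn (X \<omega>) * dn (Y \<omega>) \<partial>M)"
    unfolding e using uu(1) ud'(1) du(1) dd(1) by simp
  also have "\<dots> = pi * ((\<integral>z. up (fst z) * up (snd z) \<partial>G0) - (\<integral>z. up (fst z) * dn (snd z) \<partial>G0)
     - (\<integral>z. dn (fst z) * up (snd z) \<partial>G0) + (\<integral>z. dn (fst z) * dn (snd z) \<partial>G0))"
    unfolding uu(2) ud'(2) du(2) dd(2) by (simp add: algebra_simps)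
  also have "(\<integral>z. up (fst z) * up (snd z) \<partial>G0) - (\<integral>z. up (fst z) * dn (snd z) \<partial>G0)
     - (\<integral>z. dn (fst z) * up (snd z) \<partial>G0) + (\<integral>z. dn (fst z) * dn (snd z) \<partial>G0) = cv"
  proof -
    have g: "integrable G0 (\<lambda>z. h1 (fst z) * h2 (snd z))" if "h1 = up \<or> h1 = dn" "h2 = up \<or> h2 = dn" for h1 h2
      using that by (auto intro!: G_prod up_b dn_b)
    have e2: "(\<lambda>z. (fst z - mu) * (snd z - mu)) = (\<lambda>z. up (fst z) * up (snd z) - up (fst z) * dn (snd z)
      - dn (fst z) * up (snd z) + dn (fst z) * dn (snd z))"
      by (auto simp: fun_eq_iff ud[symmetric] algebra_simps)
    show ?thesis unfolding cv_def e2 using g[of up up] g[of up dn] g[of dn up] g[of dn dn] by simp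
  qed
  finally show ?thesis .
qed

lemma corrXY: "correlation M X Y = pi * cv / sig"
proof -
  have "sqrt (sig * sig) = sig" using sig_pos by simp
  then show ?thesis unfolding correlation_def X_mom(2) Y_mom(2) X_mom(4) Y_mom(4) cross by simp
qed

lemma iG_sq: "integrable G0 (\<lambda>z. (fst z - mu)\<^sup>2)" "(\<integral>z. (fst z - mu)\<^sup>2 \<partial>G0) = sig"
  "integrable G0 (\<lambda>z. (snd z - mu)\<^sup>2)" "(\<integral>z. (snd z - mu)\<^sup>2 \<partial>G0) = sig"
proof -
  have m: "(\<lambda>x. (x - mu)\<^sup>2) \<in> borel_measurable borel" by measurable
  note a = G_fst[OF m iP_sq] and b = G_snd[OF m iP_sq]
  show "integrable G0 (\<lambda>z. (fst z - mu)\<^sup>2)" "(\<integral>z. (fst z - mu)\<^sup>2 \<partial>G0) = sig"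
    "integrable G0 (\<lambda>z. (snd z - mu)\<^sup>2)" "(\<integral>z. (snd z - mu)\<^sup>2 \<partial>G0) = sig"
    using a b unfolding sig_def by simp_all
qed

lemma iG_cross: "integrable G0 (\<lambda>z. (fst z - mu) * (snd z - mu))"
proof -
  have m: "(\<lambda>x. x - mu) \<in> borel_measurable borel" by measurable
  show ?thesis by (rule G_prod[OF m m]) simp_all
qed

lemma corrG: "correlation G0 fst snd = cv / sig"
proof -
  have m: "(\<lambda>x. x) \<in> borel_measurable borel" by simp
  have f: "(\<integral>z. fst z \<partial>G0) = mu" using G_fst(2)[OF m iP_x] unfolding mu_def by simp
  have s: "(\<integral>z. snd z \<partial>G0) = mu" using G_snd(2)[OF m iP_x] unfolding mu_def by simp
  have "sqrt (sig * sig) = sig" using sig_pos by simp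
  then show ?thesis unfolding correlation_def f s iG_sq(2) iG_sq(4) cv_def by simp
qed

lemma cv_bound: "\<bar>cv\<bar> \<le> sig"
proof -
  have "0 \<le> (\<integral>z. ((fst z - mu) - (snd z - mu))\<^sup>2 \<partial>G0)" by simp
  also have "(\<integral>z. ((fst z - mu) - (snd z - mu))\<^sup>2 \<partial>G0)
     = (\<integral>z. (fst z - mu)\<^sup>2 + (snd z - mu)\<^sup>2 - 2 * ((fst z - mu) * (snd z - mu)) \<partial>G0)"
    by (rule arg_cong[where f="integral\<^sup>L G0"], rule ext, simp only: power2_diff mult.assoc)
  also have "\<dots> = sig + sig - 2 * cv"
    using iG_sq iG_cross unfolding cv_def by simp
  finally have 1: "cv \<le> sig" by simp
  have "0 \<le> (\<integral>z. ((fst z - mu) + (snd z - mu))\<^sup>2 \<partial>G0)" by simp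
  also have "(\<integral>z. ((fst z - mu) + (snd z - mu))\<^sup>2 \<partial>G0)
     = (\<integral>z. (fst z - mu)\<^sup>2 + (snd z - mu)\<^sup>2 + 2 * ((fst z - mu) * (snd z - mu)) \<partial>G0)"
    by (rule arg_cong[where f="integral\<^sup>L G0"], rule ext, simp only: power2_sum mult.assoc)
  also have "\<dots> = sig + sig + 2 * cv"
    using iG_sq iG_cross unfolding cv_def by simp
  finally have 2: "- cv \<le> sig" by simp
  from 1 2 show ?thesis by simp
qed

definition bk where "bk k = (\<integral>\<omega>. (J k \<omega>)\<^sup>2 \<partial>M)"

lemma int_J2: "integrable M (\<lambda>\<omega>. (J k \<omega>)\<^sup>2)"
proof (rule integrable_const_bound[where B=1])
  show "AE \<omega> in M. norm ((J k \<omega>)\<^sup>2) \<le> 1"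
    using J_le1 by eventually_elim (auto simp: power_le_one)
qed measurable

lemma int_W2: "integrable M (\<lambda>\<omega>. (W k \<omega>)\<^sup>2)"
proof (rule integrable_const_bound[where B=1])
  show "AE \<omega> in M. norm ((W k \<omega>)\<^sup>2) \<le> 1"
    using W_le1 by eventually_elim (auto simp: power_le_one)
qed measurable

lemma W2_eq: "(\<integral>\<omega>. (W k \<omega>)\<^sup>2 \<partial>M) = bk k"
proof -
  have "bk k = (\<integral>x. x\<^sup>2 \<partial>distr M borel (J k))" unfolding bk_def by (subst integral_distr) auto
  also have "\<dots> = (\<integral>x. x\<^sup>2 \<partial>distr M borel (W k))" using JW_eqd[of k] by simp
  also have "\<dots> = (\<integral>\<omega>. (W k \<omega>)\<^sup>2 \<partial>M)" by (subst integral_distr) auto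
  finally show ?thesis by simp
qed

lemma pk_le: "(\<integral>\<omega>. J k \<omega> * W k \<omega> \<partial>M) \<le> bk k"
proof -
  have "(\<integral>\<omega>. J k \<omega> * W k \<omega> \<partial>M) \<le> (\<integral>\<omega>. ((J k \<omega>)\<^sup>2 + (W k \<omega>)\<^sup>2) / 2 \<partial>M)"
  proof (rule integral_mono)
    show "integrable M (\<lambda>\<omega>. ((J k \<omega>)\<^sup>2 + (W k \<omega>)\<^sup>2) / 2)" using int_J2 int_W2 by auto
    fix \<omega> show "J k \<omega> * W k \<omega> \<le> ((J k \<omega>)\<^sup>2 + (W k \<omega>)\<^sup>2) / 2"
      using sum_squares_bound[of "J k \<omega>" "W k \<omega>"] by simp
  qed (rule int_JW)
  also have "\<dots> = ((\<integral>\<omega>. (J k \<omega>)\<^sup>2 \<partial>M) + (\<integral>\<omega>. (W k \<omega>)\<^sup>2 \<partial>M)) / 2"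
    using int_J2 int_W2 by simp
  also have "\<dots> = bk k" using W2_eq unfolding bk_def by simp
  finally show ?thesis .
qed

lemma bk_nonneg: "0 \<le> bk k" unfolding bk_def by simp

lemma bk_summable: "summable bk"
proof -
  have e1: "ennreal (bk k) = (\<integral>\<^sup>+\<omega>. ennreal ((J k \<omega>)\<^sup>2) \<partial>M)" for k
    unfolding bk_def by (rule nn_integral_eq_integral[OF int_J2, symmetric]) auto
  have le: "(\<integral>\<^sup>+\<omega>. ennreal ((J k \<omega>)\<^sup>2) \<partial>M) \<le> (\<integral>\<^sup>+\<omega>. ennreal (J k \<omega>) \<partial>M)" for k
    by (rule nn_integral_mono_AE) (use J_le1 in \<open>eventually_elim, auto simp: power2_eq_square intro!: mult_left_le\<close>)
  have "(\<Sum>k. ennreal (bk k)) \<le> (\<Sum>k. \<integral>\<^sup>+\<omega>. ennreal (J k \<omega>) \<partial>M)"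
    unfolding e1 by (intro suminf_le le) auto
  also have "\<dots> = (\<integral>\<^sup>+\<omega>. (\<Sum>k. ennreal (J k \<omega>)) \<partial>M)"
    by (rule nn_integral_suminf[symmetric]) measurable
  also have "\<dots> = (\<integral>\<^sup>+\<omega>. 1 \<partial>M)"
  proof (rule nn_integral_cong_AE)
    show "AE \<omega> in M. (\<Sum>k. ennreal (J k \<omega>)) = 1"
      using AE_J by eventually_elim (auto simp: suminf_ennreal_eq sums_iff)
  qed
  also have "\<dots> = 1" using emeasure_space_1 by simp
  finally have "(\<Sum>k. ennreal (bk k)) \<noteq> top" by (auto simp: top_unique)
  then show ?thesis by (rule summable_suminf_not_top[OF bk_nonneg])
qed

definition beta where "beta = (\<Sum>k. bk k)"

lemma pi_le_beta: "pi \<le> beta"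
  unfolding pi_def beta_def by (rule suminf_le[OF pk_le pi_summable bk_summable])

lemma beta_pos: "0 < beta"
proof (rule ccontr)
  assume "\<not> 0 < beta"
  moreover have "0 \<le> beta" unfolding beta_def by (rule suminf_nonneg[OF bk_summable bk_nonneg])
  ultimately have "beta = 0" by simp
  then have "\<forall>k. bk k = 0" unfolding beta_def using suminf_eq_zero_iff[OF bk_summable bk_nonneg] by simp
  then have "\<forall>k. AE \<omega> in M. (J k \<omega>)\<^sup>2 = 0"
    unfolding bk_def using integral_nonneg_eq_0_iff_AE[OF int_J2] by simp
  then have "AE \<omega> in M. \<forall>k. J k \<omega> = 0" by (simp add: AE_all_countable)
  with AE_J have "AE \<omega> in M. False"
    by eventually_elim (auto simp: sums_iff)
  then show False by (simp add: AE_False)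
qed

lemma pi_eq_beta_iff: "pi = beta \<longleftrightarrow> (\<forall>k. AE \<omega> in M. W k \<omega> = J k \<omega>)"
proof
  assume h: "\<forall>k. AE \<omega> in M. W k \<omega> = J k \<omega>"
  have "(\<integral>\<omega>. J k \<omega> * W k \<omega> \<partial>M) = bk k" for k
  proof -
    have ae: "AE \<omega> in M. J k \<omega> * W k \<omega> = (J k \<omega>)\<^sup>2"
      using h[rule_format, of k] by eventually_elim (simp add: power2_eq_square)
    show ?thesis unfolding bk_def by (rule integral_cong_AE[OF _ _ ae]) measurable
  qed
  then show "pi = beta" unfolding pi_def beta_def by simp
next
  assume eq: "pi = beta"
  show "\<forall>k. AE \<omega> in M. W k \<omega> = J k \<omega>"
  proof
    fix k
    have pk: "(\<integral>\<omega>. J k \<omega> * W k \<omega> \<partial>M) = bk k"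
    proof (rule ccontr)
      assume "(\<integral>\<omega>. J k \<omega> * W k \<omega> \<partial>M) \<noteq> bk k"
      then have lt: "0 < bk k - (\<integral>\<omega>. J k \<omega> * W k \<omega> \<partial>M)" using pk_le[of k] by simp
      have sd: "summable (\<lambda>k. bk k - (\<integral>\<omega>. J k \<omega> * W k \<omega> \<partial>M))"
        by (rule summable_diff[OF bk_summable pi_summable])
      have "0 < (\<Sum>k. bk k - (\<integral>\<omega>. J k \<omega> * W k \<omega> \<partial>M))"
        by (rule suminf_pos2[OF sd _ lt]) (use pk_le in \<open>auto simp: algebra_simps\<close>)
      also have "\<dots> = beta - pi" unfolding beta_def pi_def
        by (rule suminf_diff[OF bk_summable pi_summable, symmetric])
      finally show False using eq by simp
    qed
    have "(\<integral>\<omega>. (J k \<omega> - W k \<omega>)\<^sup>2 \<partial>M) = (\<integral>\<omega>. (J k \<omega>)\<^sup>2 + (W k \<omega>)\<^sup>2 - 2 * (J k \<omega> * W k \<omega>) \<partial>M)"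
      by (rule arg_cong[where f="integral\<^sup>L M"], rule ext, simp only: power2_diff mult.assoc)
    also have "\<dots> = bk k + bk k - 2 * bk k"
      using int_J2[of k] int_W2[of k] int_JW[of k k] W2_eq[of k] pk unfolding bk_def by simp
    finally have z: "(\<integral>\<omega>. (J k \<omega> - W k \<omega>)\<^sup>2 \<partial>M) = 0" by simp
    have iD: "integrable M (\<lambda>\<omega>. (J k \<omega> - W k \<omega>)\<^sup>2)"
    proof -
      have "(\<lambda>\<omega>. (J k \<omega> - W k \<omega>)\<^sup>2) = (\<lambda>\<omega>. (J k \<omega>)\<^sup>2 + (W k \<omega>)\<^sup>2 - 2 * (J k \<omega> * W k \<omega>))"
        by (rule ext, simp only: power2_diff mult.assoc)
      then show ?thesis using int_J2[of k] int_W2[of k] int_JW[of k k] by simp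
    qed
    have "AE \<omega> in M. (J k \<omega> - W k \<omega>)\<^sup>2 = 0"
      using integral_nonneg_eq_0_iff_AE[OF iD] z by simp
    then show "AE \<omega> in M. W k \<omega> = J k \<omega>" by eventually_elim simp
  qed
qed

lemma main:
  "correlation M X Y \<in> {-beta..beta}
    \<and> (correlation M X Y = beta \<longleftrightarrow> (\<forall>k. AE \<omega> in M. W k \<omega> = J k \<omega>) \<and> correlation G0 fst snd = 1)
    \<and> (correlation M X Y = -beta \<longleftrightarrow> (\<forall>k. AE \<omega> in M. W k \<omega> = J k \<omega>) \<and> correlation G0 fst snd = -1)"
proof -
  define r where "r = cv / sig"
  have c: "correlation M X Y = pi * r" unfolding corrXY r_def by simp
  have g: "correlation G0 fst snd = r" unfolding corrG r_def ..
  have r1: "r \<le> 1" and r2: "-1 \<le> r"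
    using cv_bound sig_pos unfolding r_def by (auto simp: divide_le_eq le_divide_eq abs_le_iff)
  have p0: "0 \<le> pi" by (rule pi_nonneg)
  have pb: "pi \<le> beta" by (rule pi_le_beta)
  have b0: "0 < beta" by (rule beta_pos)
  have u: "pi * r \<le> pi" using mult_left_mono[OF r1 p0] by simp
  have l: "- pi \<le> pi * r" using mult_left_mono[OF r2 p0] by simp
  have A: "pi * r \<in> {-beta..beta}" using u l pb by auto
  have B: "pi * r = beta \<longleftrightarrow> pi = beta \<and> r = 1"
  proof
    assume h: "pi * r = beta"
    then have "pi = beta" using u pb by linarith
    then show "pi = beta \<and> r = 1" using h b0 by simp
  qed simp
  have C: "pi * r = -beta \<longleftrightarrow> pi = beta \<and> r = -1"
  proof
    assume h: "pi * r = -beta"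
    then have "pi = beta" using l pb by linarith
    moreover have "beta * r = beta * (-1)" using h \<open>pi = beta\<close> by simp
    then have "r = -1" using b0 by (simp only: mult_cancel_left) simp
    ultimately show "pi = beta \<and> r = -1" by simp
  qed simp
  show ?thesis unfolding c g using A B C pi_eq_beta_iff by simp
qed

end

theorem corollary1:
  fixes M :: "'a measure"
    and G0 :: "(real \<times> real) measure" and P0 :: "real measure"
    and J W th ph :: "nat \<Rightarrow> 'a \<Rightarrow> real"
    and X Y :: "'a \<Rightarrow> real"
  assumes M: "prob_space M"
    and G0: "prob_space G0" "sets G0 = sets borel"
    and marg1: "distr G0 borel fst = P0" and marg2: "distr G0 borel snd = P0"
    and P0_sq: "integrable P0 (\<lambda>x. x\<^sup>2)"
    and P0_var: "(\<integral>x. (x - (\<integral>y. y \<partial>P0))\<^sup>2 \<partial>P0) > 0"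
    and J_meas: "\<And>k. J k \<in> borel_measurable M"
    and W_meas: "\<And>k. W k \<in> borel_measurable M"
    and th_meas: "\<And>k. th k \<in> borel_measurable M"
    and ph_meas: "\<And>k. ph k \<in> borel_measurable M"
    and J_nonneg: "\<And>k. AE \<omega> in M. J k \<omega> \<ge> 0"
    and W_nonneg: "\<And>k. AE \<omega> in M. W k \<omega> \<ge> 0"
    and J_sum: "AE \<omega> in M. (\<lambda>k. J k \<omega>) sums 1"
    and W_sum: "AE \<omega> in M. (\<lambda>k. W k \<omega>) sums 1"
    and JW_eqd: "\<And>k. distr M borel (J k) = distr M borel (W k)"
    and atoms_law: "\<And>k. distr M borel (\<lambda>\<omega>. (th k \<omega>, ph k \<omega>)) = G0"
    and atoms_indep: "prob_space.indep_vars M (\<lambda>_. borel) (\<lambda>k \<omega>. (th k \<omega>, ph k \<omega>)) UNIV"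
    and weights_atoms_indep:
      "prob_space.indep_var M
         (Pi\<^sub>M UNIV (\<lambda>_. borel)) (\<lambda>\<omega> k. (J k \<omega>, W k \<omega>))
         (Pi\<^sub>M UNIV (\<lambda>_. borel)) (\<lambda>\<omega> k. (th k \<omega>, ph k \<omega>))"
    and X_meas: "X \<in> borel_measurable M" and Y_meas: "Y \<in> borel_measurable M"
    and cond_law:
      "\<And>S B C. S \<in> sets (Pi\<^sub>M UNIV (\<lambda>_. borel :: (real \<times> real \<times> real \<times> real) measure)) \<Longrightarrow>
         B \<in> sets borel \<Longrightarrow> C \<in> sets borel \<Longrightarrow>
         measure M ({\<omega> \<in> space M. (\<lambda>k. (J k \<omega>, W k \<omega>, th k \<omega>, ph k \<omega>)) \<in> S
                                    \<and> X \<omega> \<in> B \<and> Y \<omega> \<in> C})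
         = (\<integral>\<omega>. indicator {\<omega>. (\<lambda>k. (J k \<omega>, W k \<omega>, th k \<omega>, ph k \<omega>)) \<in> S} \<omega>
                  * rand_meas (\<lambda>k. J k \<omega>) (\<lambda>k. th k \<omega>) B
                  * rand_meas (\<lambda>k. W k \<omega>) (\<lambda>k. ph k \<omega>) C \<partial>M)"
  defines "\<rho>0 \<equiv> correlation G0 fst snd"
    and "\<beta> \<equiv> (\<Sum>k. \<integral>\<omega>. (J k \<omega>)\<^sup>2 \<partial>M)"
  shows "correlation M X Y \<in> {-\<beta>..\<beta>}
    \<and> (correlation M X Y = \<beta> \<longleftrightarrow> (\<forall>k. AE \<omega> in M. W k \<omega> = J k \<omega>) \<and> \<rho>0 = 1)
    \<and> (correlation M X Y = -\<beta> \<longleftrightarrow> (\<forall>k. AE \<omega> in M. W k \<omega> = J k \<omega>) \<and> \<rho>0 = -1)"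
proof -
  interpret cmodel M G0 P0 J W th ph X Y
    apply (rule cmodel.intro)
    by (fact M G0 marg1 marg2 P0_sq P0_var J_meas W_meas th_meas ph_meas J_nonneg W_nonneg J_sum W_sum
      JW_eqd atoms_law atoms_indep weights_atoms_indep X_meas Y_meas cond_law)+
  show ?thesis unfolding \<rho>0_def \<beta>_def using main unfolding beta_def bk_def by simp
qed


end
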